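(* Let $A_1,\ldots,A_k$ and $B_1,\ldots,B_k$ be $n\times n$ Hermitian matrices with $mI\le A_i,B_i\le MI$ for $i=1,\ldots,k$ and some scalars $0<m<M$, and let $w_1,\ldots,w_k$ be positive scalars with $\sum_{i=1}^kw_i=1$. Then $$\left(\sum_{i=1}^kw_iA_i^2\right)^{1/2}+\left(\sum_{i=1}^kw_iB_i^2\right)^{1/2}\le\frac{M+m}{2\sqrt{Mm}}\left(\sum_{i=1}^kw_i(A_i+B_i)^2\right)^{1/2}$$ and $$\left(\sum_{i=1}^kw_iA_i^2\right)^{1/2}+\left(\sum_{i=1}^kw_iB_i^2\right)^{1/2}\le\frac{(M-m)^2}{2(M+m)}I+\left(\sum_{i=1}^kw_i(A_i+B_i)^2\right)^{1/2}.$$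
   Context: $\le$ is the Löwner order on Hermitian matrices. *)

theory Defs
  imports "HOL-Analysis.Analysis"
begin

definition adjoint_mat :: "complex^'n^'n \<Rightarrow> complex^'n^'n" where
  "adjoint_mat A = (\<chi> i j. cnj (A $ j $ i))"

definition hermitian :: "complex^'n^'n \<Rightarrow> bool" where
  "hermitian A \<longleftrightarrow> adjoint_mat A = A"

definition qform :: "complex^'n^'n \<Rightarrow> complex^'n \<Rightarrow> complex" where
  "qform A x = (\<Sum>i\<in>UNIV. cnj (x $ i) * ((A *v x) $ i))"

definition psd :: "complex^'n^'n \<Rightarrow> bool" where
  "psd A \<longleftrightarrow> hermitian A \<and> (\<forall>x. 0 \<le> Re (qform A x))"

definition loewner_le :: "complex^'n^'n \<Rightarrow> complex^'n^'n \<Rightarrow> bool" (infix \<open>\<le>\<^sub>L\<close> 50) where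
  "A \<le>\<^sub>L B \<longleftrightarrow> hermitian A \<and> hermitian B \<and> psd (B - A)"

definition msqrt :: "complex^'n^'n \<Rightarrow> complex^'n^'n" where
  "msqrt A = (THE B. psd B \<and> B ** B = A)"

end

theory Submission
  imports Defs
begin


definition cinner :: "complex^'n \<Rightarrow> complex^'n \<Rightarrow> complex" where
  "cinner x y = (\<Sum>i\<in>UNIV. cnj (x $ i) * y $ i)"

definition qf :: "complex^'n^'n \<Rightarrow> complex^'n \<Rightarrow> real" where
  "qf A x = inner x (A *v x)"

lemma Re_cinner: "Re (cinner x y) = inner x y"
  by (simp add: cinner_def inner_vec_def inner_complex_def Re_sum)

lemma Re_qform: "Re (qform A x) = qf A x"
  by (simp add: qform_def qf_def inner_vec_def inner_complex_def Re_sum)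

lemma cinner_adj: "cinner x (A *v y) = cinner (adjoint_mat A *v x) y"
proof -
  have "cinner x (A *v y) = (\<Sum>i\<in>UNIV. \<Sum>k\<in>UNIV. cnj (x $ i) * A $ i $ k * y $ k)"
    by (simp add: cinner_def matrix_vector_mult_def sum_distrib_left mult.assoc)
  also have "\<dots> = (\<Sum>k\<in>UNIV. \<Sum>i\<in>UNIV. cnj (x $ i) * A $ i $ k * y $ k)"
    by (rule sum.swap)
  also have "\<dots> = cinner (adjoint_mat A *v x) y"
    by (simp add: cinner_def matrix_vector_mult_def adjoint_mat_def sum_distrib_left sum_distrib_right mult_ac)
  finally show ?thesis .
qed

lemma herm_cinner: "hermitian A \<Longrightarrow> cinner x (A *v y) = cinner (A *v x) y"
  by (simp add: cinner_adj hermitian_def)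

lemma herm_inner: "hermitian A \<Longrightarrow> inner x (A *v y) = inner (A *v x) y"
  by (metis Re_cinner herm_cinner)

lemma adj_adj[simp]: "adjoint_mat (adjoint_mat A) = A"
  by (simp add: adjoint_mat_def vec_eq_iff)

lemma adj_mult: "adjoint_mat (A ** B) = adjoint_mat B ** adjoint_mat A"
  by (simp add: adjoint_mat_def vec_eq_iff matrix_matrix_mult_def mult.commute)

lemma adj_add: "adjoint_mat (A + B) = adjoint_mat A + adjoint_mat B"
  by (simp add: adjoint_mat_def vec_eq_iff)

lemma adj_diff: "adjoint_mat (A - B) = adjoint_mat A - adjoint_mat B"
  by (simp add: adjoint_mat_def vec_eq_iff)

lemma adj_scaleR: "adjoint_mat (r *\<^sub>R A) = r *\<^sub>R adjoint_mat A"
  by (simp add: adjoint_mat_def vec_eq_iff)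

lemma adj_mat1: "adjoint_mat (mat 1) = mat 1"
  by (simp add: adjoint_mat_def vec_eq_iff mat_def)

lemma herm_add: "hermitian A \<Longrightarrow> hermitian B \<Longrightarrow> hermitian (A + B)"
  by (simp add: hermitian_def adj_add)
lemma herm_diff: "hermitian A \<Longrightarrow> hermitian B \<Longrightarrow> hermitian (A - B)"
  by (simp add: hermitian_def adj_diff)
lemma herm_scaleR: "hermitian A \<Longrightarrow> hermitian (r *\<^sub>R A)"
  by (simp add: hermitian_def adj_scaleR)
lemma herm_mat1: "hermitian (mat 1)"
  by (simp add: hermitian_def adj_mat1)
lemma herm_sum: "(\<And>i. i \<in> S \<Longrightarrow> hermitian (f i)) \<Longrightarrow> hermitian (sum f S)"
proof (induction S rule: infinite_finite_induct)
  case (infinite A) then show ?case by (simp add: hermitian_def adjoint_mat_def vec_eq_iff)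
next
  case empty then show ?case by (simp add: hermitian_def adjoint_mat_def vec_eq_iff)
next
  case (insert x F) then show ?case by (simp add: herm_add)
qed
lemma herm_sq: "hermitian A \<Longrightarrow> hermitian (A ** A)"
  by (simp add: hermitian_def adj_mult)

lemma mv_add: "((A::complex^'n^'m) + B) *v x = A *v x + B *v x"
  by (simp add: matrix_vector_mult_add_rdistrib)
lemma mv_diff: "((A::complex^'n^'m) - B) *v x = A *v x - B *v x"
  by (simp add: vec_eq_iff matrix_vector_mult_def algebra_simps flip: sum_subtractf)
lemma mv_scaleR: "((r::real) *\<^sub>R (A::complex^'n^'m)) *v x = r *\<^sub>R (A *v x)"
  by (simp add: vec_eq_iff matrix_vector_mult_def scaleR_sum_right)
lemma mv_scaleR2: "(A::complex^'n^'m) *v ((r::real) *\<^sub>R x) = r *\<^sub>R (A *v x)"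
  by (simp add: vec_eq_iff matrix_vector_mult_def scaleR_sum_right)
lemma mv_sum: "(sum f S) *v (x::complex^'n) = sum (\<lambda>i. f i *v x) S"
  by (induction S rule: infinite_finite_induct) (simp_all add: mv_add)

lemma qf_add: "qf (A + B) x = qf A x + qf B x"
  by (simp add: qf_def mv_add inner_add_right)
lemma qf_diff: "qf (A - B) x = qf A x - qf B x"
  by (simp add: qf_def mv_diff inner_diff_right)
lemma qf_scaleR: "qf (r *\<^sub>R A) x = r * qf A x"
  by (simp add: qf_def mv_scaleR)
lemma qf_sum: "qf (sum f S) x = (\<Sum>i\<in>S. qf (f i) x)"
  by (simp add: qf_def mv_sum inner_sum_right)
lemma qf_mat1: "qf (mat 1) x = (norm x)^2"
  by (simp add: qf_def power2_norm_eq_inner)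
lemma qf_sq: "hermitian A \<Longrightarrow> qf (A ** A) x = (norm (A *v x))^2"
  by (simp add: qf_def herm_inner power2_norm_eq_inner flip: matrix_vector_mul_assoc)

lemma psd_iff: "psd A \<longleftrightarrow> hermitian A \<and> (\<forall>x. 0 \<le> qf A x)"
  by (simp add: psd_def Re_qform)

lemma loewner_iff: "A \<le>\<^sub>L B \<longleftrightarrow> hermitian A \<and> hermitian B \<and> (\<forall>x. qf A x \<le> qf B x)"
  by (auto simp: loewner_le_def psd_iff herm_diff qf_diff)



lemma disc_zero:
  fixes b c :: real
  assumes "\<And>t. 0 \<le> 2 * t * b + t^2 * c"
  shows "b = 0"
proof (rule ccontr)
  assume "b \<noteq> 0"
  define a where "a = \<bar>c\<bar> + 1"
  have pos: "a > 0" by (simp add: a_def)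
  define t where "t = - b / a"
  have ta: "t * a = - b" using pos by (simp add: t_def)
  have tnz: "t \<noteq> 0" using \<open>b \<noteq> 0\<close> pos by (simp add: t_def)
  have "2 * t * b + t^2 * c \<le> 2 * t * b + t^2 * \<bar>c\<bar>"
    by (simp add: mult_left_mono)
  also have "\<dots> = t^2 * (\<bar>c\<bar> - 2 * a)"
  proof -
    have bb: "b = - (t * a)" using ta by simp
    show ?thesis by (simp add: bb power2_eq_square algebra_simps)
  qed
  also have "\<dots> < 0"
    using tnz by (intro mult_pos_neg) (auto simp: a_def)
  finally show False using assms[of t] by simp
qed

lemma qf_scale2: "qf D (r *\<^sub>R y) = r^2 * qf D y"
  by (simp add: qf_def mv_scaleR2 power2_eq_square)

lemma qf_expand:
  assumes "hermitian G"
  shows "qf G (u + t *\<^sub>R y) = qf G u + 2 * t * inner (G *v u) y + t^2 * qf G y"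
proof -
  have "qf G (u + t *\<^sub>R y) = inner u (G *v u) + t * inner u (G *v y) + t * inner y (G *v u) + t^2 * inner y (G *v y)"
    by (simp add: qf_def matrix_vector_right_distrib mv_scaleR2 inner_add_left inner_add_right power2_eq_square algebra_simps)
  also have "inner u (G *v y) = inner (G *v u) y" using herm_inner[OF assms] .
  also have "inner y (G *v u) = inner (G *v u) y" by (simp add: inner_commute)
  finally show ?thesis by (simp add: qf_def)
qed

lemma continuous_qf: "continuous_on S (qf (D::complex^'n^'n))"
proof -
  have "bounded_linear (\<lambda>x::complex^'n. D *v x)"
    using matrix_vector_mul_linear linear_conv_bounded_linear by blast
  then have "continuous_on S (\<lambda>x::complex^'n. D *v x)"
    by (rule linear_continuous_on)
  then show ?thesis unfolding qf_def
    by (intro continuous_intros)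
qed

lemma mineig:
  fixes D :: "complex^'n^'n" and W :: "(complex^'n) set"
  assumes herm: "hermitian D" and sub: "subspace W" and clo: "closed W"
    and inv: "\<And>x. x \<in> W \<Longrightarrow> D *v x \<in> W" and nz: "x0 \<in> W" "x0 \<noteq> 0"
  shows "\<exists>u l. u \<in> W \<and> norm u = 1 \<and> D *v u = l *\<^sub>R u \<and> (\<forall>y\<in>W. l * (norm y)^2 \<le> qf D y)"
proof -
  define S where "S = W \<inter> sphere 0 1"
  have "compact S" unfolding S_def using clo by (intro closed_Int_compact compact_sphere)
  have "(1 / norm x0) *\<^sub>R x0 \<in> S" using nz sub unfolding S_def
    by (auto simp: subspace_scale)
  then have "S \<noteq> {}" by blast
  obtain u where uS: "u \<in> S" and umin: "\<And>y. y \<in> S \<Longrightarrow> qf D u \<le> qf D y"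
    using continuous_attains_inf[OF \<open>compact S\<close> \<open>S \<noteq> {}\<close> continuous_qf] by blast
  define l where "l = qf D u"
  have uW: "u \<in> W" and un: "norm u = 1" using uS by (auto simp: S_def)
  have low: "l * (norm y)^2 \<le> qf D y" if "y \<in> W" for y
  proof (cases "y = 0")
    case True then show ?thesis by (simp add: qf_def)
  next
    case False
    then have "(1 / norm y) *\<^sub>R y \<in> S" using that sub by (auto simp: S_def subspace_scale)
    from umin[OF this] have "l \<le> (1 / norm y)^2 * qf D y" by (simp add: l_def qf_scale2)
    then show ?thesis using False by (simp add: field_simps power2_eq_square)
  qed
  define G where "G = D - l *\<^sub>R mat 1"
  have hG: "hermitian G" unfolding G_def by (intro herm_diff herm_scaleR herm_mat1 herm)
  have qG: "qf G y = qf D y - l * (norm y)^2" for y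
    by (simp add: G_def qf_diff qf_scaleR qf_mat1)
  have qGu: "qf G u = 0" using un by (simp add: qG l_def)
  have orth: "inner (G *v u) y = 0" if "y \<in> W" for y
  proof (rule disc_zero[where c = "qf G y"])
    fix t :: real
    have "u + t *\<^sub>R y \<in> W" using uW that sub by (simp add: subspace_add subspace_scale)
    then have "0 \<le> qf G (u + t *\<^sub>R y)" using low[of "u + t *\<^sub>R y"] by (simp add: qG)
    then show "0 \<le> 2 * t * inner (G *v u) y + t^2 * qf G y"
      using qf_expand[OF hG, of u t y] qGu by simp
  qed
  have Gu: "G *v u = D *v u - l *\<^sub>R u" by (simp add: G_def mv_diff mv_scaleR)
  have "G *v u \<in> W" unfolding Gu using uW inv sub by (simp add: subspace_diff subspace_scale)
  from orth[OF this] have "G *v u = 0" by simp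
  then have "D *v u = l *\<^sub>R u" by (simp add: Gu)
  then show ?thesis using uW un low by blast
qed



lemma cinner_add_right: "cinner x (y + z) = cinner x y + cinner x z"
  by (simp add: cinner_def distrib_left sum.distrib)
lemma cinner_diff_right: "cinner x (y - z) = cinner x y - cinner x z"
  by (simp add: cinner_def right_diff_distrib sum_subtractf)
lemma vscale_comp: "((r::real) *\<^sub>R (y::complex^'n)) $ i = of_real r * y $ i"
  by (subst vector_scaleR_component) (rule scaleR_conv_of_real)
lemma cinner_scaleR_right: "cinner x (r *\<^sub>R y) = of_real r * cinner x y"
  by (simp only: cinner_def vscale_comp sum_distrib_left) (simp add: mult_ac)
lemma cinner_scaleR_left: "cinner (r *\<^sub>R x) y = of_real r * cinner x y"
  by (simp only: cinner_def vscale_comp sum_distrib_left) (simp add: mult_ac)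
lemma cinner_zero_right[simp]: "cinner x 0 = 0"
  by (simp add: cinner_def)
lemma cinner_cnj: "cnj (cinner x y) = cinner y x"
  by (simp add: cinner_def mult.commute)
lemma cinner_self: "cinner x x = of_real ((norm x)^2)"
proof -
  have "Re (cinner x x) = (norm x)^2" by (simp add: Re_cinner power2_norm_eq_inner)
  moreover have "Im (cinner x x) = 0"
  proof -
    have "Im (cinner x x) = (\<Sum>i\<in>UNIV. Im (cnj (x $ i) * x $ i))"
      by (simp add: cinner_def Im_sum)
    also have "\<dots> = 0" by (simp add: mult.commute)
    finally show ?thesis .
  qed
  ultimately show ?thesis by (simp add: complex_eq_iff)
qed

lemma continuous_cinner: "continuous_on UNIV (\<lambda>x. cinner (v::complex^'n) x)"
  unfolding cinner_def by (intro continuous_intros)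

lemma exists_orth:
  fixes v :: "'n \<Rightarrow> complex^'n"
  assumes "card F < CARD('n)"
  shows "\<exists>x. x \<noteq> 0 \<and> (\<forall>i\<in>F. cinner (v i) x = 0)"
proof -
  define iv where "iv i = (\<chi> j. \<i> * v i $ j)" for i
  define S where "S = v ` F \<union> iv ` F"
  have fin: "finite S" by (simp add: S_def)
  have "dim S \<le> card S" using dim_le_card'[OF fin] .
  also have "\<dots> \<le> card (v ` F) + card (iv ` F)" unfolding S_def by (rule card_Un_le)
  also have "\<dots> \<le> card F + card F" by (intro add_mono card_image_le) auto
  also have "\<dots> < DIM(complex^'n)" using assms by simp
  finally obtain x where x: "x \<noteq> 0" "\<And>y. y \<in> span S \<Longrightarrow> orthogonal x y"
    using orthogonal_to_subspace_exists by blast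
  have "cinner (v i) x = 0" if "i \<in> F" for i
  proof -
    have "inner x (v i) = 0" using x(2)[of "v i"] that
      by (auto simp: S_def orthogonal_def intro: span_base)
    then have re: "Re (cinner (v i) x) = 0" by (simp add: Re_cinner inner_commute)
    have "inner x (iv i) = 0" using x(2)[of "iv i"] that
      by (auto simp: S_def orthogonal_def intro: span_base)
    then have "Re (cinner (iv i) x) = 0" by (simp add: Re_cinner inner_commute)
    moreover have "cinner (iv i) x = - \<i> * cinner (v i) x"
      by (simp add: cinner_def iv_def sum_distrib_left mult_ac)
    ultimately have "Im (cinner (v i) x) = 0" by simp
    with re show ?thesis by (simp add: complex_eq_iff)
  qed
  with x(1) show ?thesis by blast
qed

lemma spec_induct:
  fixes H :: "complex^'n^'n" and F :: "'n set"
  assumes herm: "hermitian H"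
  shows "\<exists>v lam. (\<forall>i\<in>F. \<forall>j\<in>F. cinner (v i) (v j) = (if i = j then 1 else 0))
                 \<and> (\<forall>i\<in>F. H *v v i = lam i *\<^sub>R v i)"
proof -
  have "finite F" by simp
  then show ?thesis
  proof (induction F rule: finite_induct)
    case empty then show ?case by simp
  next
    case (insert a F)
    then obtain v lam where orth: "\<forall>i\<in>F. \<forall>j\<in>F. cinner (v i) (v j) = (if i = j then 1 else 0)"
      and eig: "\<forall>i\<in>F. H *v v i = lam i *\<^sub>R v i" by blast
    define W where "W = {x. \<forall>i\<in>F. cinner (v i) x = 0}"
    have sub: "subspace W" unfolding subspace_def W_def
      by (simp add: cinner_add_right cinner_scaleR_right)
    have "W = (\<Inter>i\<in>F. {x. cinner (v i) x = 0})" by (auto simp: W_def)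
    then have clo: "closed W"
      by (auto intro!: closed_INT closed_Collect_eq continuous_cinner)
    have inv: "H *v x \<in> W" if "x \<in> W" for x
    proof -
      have "cinner (v i) (H *v x) = 0" if "i \<in> F" for i
        using herm_cinner[OF herm, of "v i" x] eig that \<open>x \<in> W\<close>
        by (simp add: cinner_scaleR_left W_def)
      then show ?thesis by (simp add: W_def)
    qed
    have "card F < CARD('n)"
    proof -
      have "card (insert a F) \<le> CARD('n)" by (rule card_mono) auto
      then show ?thesis using insert by simp
    qed
    then obtain x0 where x0: "x0 \<noteq> 0" "x0 \<in> W" using exists_orth[of F v] by (auto simp: W_def)
    obtain u l where u: "u \<in> W" "norm u = 1" "H *v u = l *\<^sub>R u"
      using mineig[OF herm sub clo inv x0(2) x0(1)] by blast
    define v' where "v' = v(a := u)"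
    define lam' where "lam' = lam(a := l)"
    have uo: "cinner (v i) u = 0" "cinner u (v i) = 0" if "i \<in> F" for i
      using u(1) that by (auto simp: W_def simp flip: cinner_cnj[of "v i" u])
    have "\<forall>i\<in>insert a F. \<forall>j\<in>insert a F. cinner (v' i) (v' j) = (if i = j then 1 else 0)"
      using orth uo u(2) insert.hyps(2) cinner_self[of u] by (auto simp: v'_def)
    moreover have "\<forall>i\<in>insert a F. H *v v' i = lam' i *\<^sub>R v' i"
      using eig u(3) insert.hyps(2) by (auto simp: v'_def lam'_def)
    ultimately show ?case by blast
  qed
qed



definition diagm :: "('n \<Rightarrow> real) \<Rightarrow> complex^'n^'n" where
  "diagm d = (\<chi> i j. if i = j then of_real (d i) else 0)"

definition umat :: "('n \<Rightarrow> complex^'n) \<Rightarrow> complex^'n^'n" where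
  "umat v = (\<chi> i j. v j $ i)"

lemma spectral:
  fixes H :: "complex^'n^'n"
  assumes "hermitian H"
  shows "\<exists>(v::'n \<Rightarrow> complex^'n) (lam::'n \<Rightarrow> real). (\<forall>i j. cinner (v i) (v j) = (if i = j then 1 else 0))
                 \<and> (\<forall>i. H *v v i = lam i *\<^sub>R v i)"
  using spec_induct[OF assms, of UNIV] by blast

lemma umat_unitary:
  assumes "\<forall>i j. cinner (v i) (v j) = (if i = j then 1 else 0)"
  shows "adjoint_mat (umat v) ** umat v = mat 1" "umat v ** adjoint_mat (umat v) = mat 1"
proof -
  show 1: "adjoint_mat (umat v) ** umat v = mat 1"
    using assms by (simp add: vec_eq_iff matrix_matrix_mult_def adjoint_mat_def umat_def mat_def cinner_def)
  then show "umat v ** adjoint_mat (umat v) = mat 1"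
    using matrix_left_right_inverse by blast
qed

lemma umat_eig:
  assumes "\<forall>i. A *v v i = lam i *\<^sub>R v i"
  shows "A ** umat v = umat v ** diagm lam"
proof -
  have "(A ** umat v) $ i $ j = (umat v ** diagm lam) $ i $ j" for i j
  proof -
    have "(A ** umat v) $ i $ j = (A *v v j) $ i"
      by (simp add: matrix_matrix_mult_def matrix_vector_mult_def umat_def)
    also have "\<dots> = of_real (lam j) * v j $ i" using assms by (simp del: vector_scaleR_component add: vscale_comp)
    also have "\<dots> = (umat v ** diagm lam) $ i $ j"
      by (simp add: matrix_matrix_mult_def umat_def diagm_def if_distrib if_distribR mult.commute cong: if_cong)
    finally show ?thesis .
  qed
  then show ?thesis by (simp add: vec_eq_iff)
qed

lemma diagm_mult: "diagm a ** diagm b = diagm (\<lambda>i. a i * b i)"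
proof -
  have "(diagm a ** diagm b) $ i $ j = diagm (\<lambda>i. a i * b i) $ i $ j" for i j
  proof -
    have "(diagm a ** diagm b) $ i $ j = (\<Sum>k\<in>UNIV. (if i = k then of_real (a i) else 0) * (if k = j then of_real (b k) else (0::complex)))"
      by (simp add: matrix_matrix_mult_def diagm_def)
    also have "\<dots> = (\<Sum>k\<in>UNIV. if k = i then (if i = j then of_real (a i * b i) else 0) else 0)"
      by (intro sum.cong) auto
    also have "\<dots> = diagm (\<lambda>i. a i * b i) $ i $ j" by (simp add: diagm_def)
    finally show ?thesis .
  qed
  then show ?thesis by (simp add: vec_eq_iff)
qed

lemma adj_diagm: "adjoint_mat (diagm d) = diagm d"
  by (simp add: vec_eq_iff adjoint_mat_def diagm_def)

lemma qf_diagm: "qf (diagm d) y = (\<Sum>i\<in>UNIV. d i * inner (y $ i) (y $ i))"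
proof -
  have "diagm d *v y = (\<chi> i. of_real (d i) * y $ i)"
    by (simp add: vec_eq_iff matrix_vector_mult_def diagm_def if_distrib if_distribR cong: if_cong)
  then show ?thesis
    by (simp add: qf_def inner_vec_def inner_complex_def algebra_simps)
qed

lemma qf_diagm_nonneg: "(\<And>i. 0 \<le> d i) \<Longrightarrow> 0 \<le> qf (diagm d) y"
  unfolding qf_diagm by (intro sum_nonneg mult_nonneg_nonneg) auto

lemma qf_conj: "qf (U ** D ** adjoint_mat U) x = qf D (adjoint_mat U *v x)"
proof -
  have "qf (U ** D ** adjoint_mat U) x = Re (cinner x (U *v (D *v (adjoint_mat U *v x))))"
    by (simp add: Re_cinner qf_def flip: matrix_vector_mul_assoc)
  also have "\<dots> = Re (cinner (adjoint_mat U *v x) (D *v (adjoint_mat U *v x)))"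
    by (simp add: cinner_adj)
  finally show ?thesis by (simp add: Re_cinner qf_def)
qed

lemma herm_conj: "hermitian D \<Longrightarrow> hermitian (U ** D ** adjoint_mat U)"
  by (simp add: hermitian_def adj_mult matrix_mul_assoc)

lemma eig_nonneg:
  assumes "psd Q" "cinner u u = 1" "Q *v u = l *\<^sub>R u"
  shows "0 \<le> l"
proof -
  have n: "inner u u = 1" using assms(2) by (metis Re_cinner one_complex.sel)
  have "0 \<le> qf Q u" using assms(1) by (simp add: psd_iff)
  also have "qf Q u = l" using assms(3) n by (simp add: qf_def)
  finally show ?thesis .
qed

lemma psd_sqrt_exists:
  fixes X :: "complex^'n^'n"
  assumes "psd X"
  shows "\<exists>S. psd S \<and> S ** S = X"
proof -
  have hX: "hermitian X" using assms by (simp add: psd_def)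
  obtain v :: "'n \<Rightarrow> complex^'n" and lam :: "'n \<Rightarrow> real" where on: "\<forall>i j. cinner (v i) (v j) = (if i = j then 1 else 0)"
    and eig: "\<forall>i. X *v v i = lam i *\<^sub>R v i" using spectral[OF hX] by blast
  have nn: "0 \<le> lam i" for i using eig_nonneg[OF assms, of "v i" "lam i"] on eig by simp
  define U where "U = umat v"
  have u1: "adjoint_mat U ** U = mat 1" and u2: "U ** adjoint_mat U = mat 1"
    using umat_unitary[OF on] by (simp_all add: U_def)
  have XU: "X ** U = U ** diagm lam" using umat_eig[OF eig] by (simp add: U_def)
  have Xeq: "X = U ** diagm lam ** adjoint_mat U"
  proof -
    have "X = X ** (U ** adjoint_mat U)" by (simp add: u2)
    also have "\<dots> = U ** diagm lam ** adjoint_mat U" by (simp add: matrix_mul_assoc XU)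
    finally show ?thesis .
  qed
  define S where "S = U ** diagm (\<lambda>i. sqrt (lam i)) ** adjoint_mat U"
  have "S ** S = U ** (diagm (\<lambda>i. sqrt (lam i)) ** (adjoint_mat U ** U) ** diagm (\<lambda>i. sqrt (lam i))) ** adjoint_mat U"
    by (simp add: S_def matrix_mul_assoc)
  also have "\<dots> = U ** (diagm (\<lambda>i. sqrt (lam i)) ** diagm (\<lambda>i. sqrt (lam i))) ** adjoint_mat U"
    by (simp only: u1 matrix_mul_rid)
  also have "diagm (\<lambda>i. sqrt (lam i)) ** diagm (\<lambda>i. sqrt (lam i)) = diagm lam"
    using nn by (simp add: diagm_mult)
  also have "U ** diagm lam ** adjoint_mat U = X" by (rule Xeq[symmetric])
  finally have SS: "S ** S = X" .
  have "psd S" unfolding psd_iff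
  proof
    show "hermitian S" unfolding S_def by (intro herm_conj) (simp add: hermitian_def adj_diagm)
    show "\<forall>x. 0 \<le> qf S x" unfolding S_def qf_conj using nn by (auto intro!: qf_diagm_nonneg)
  qed
  with SS show ?thesis by blast
qed

lemma sqrt_eig:
  assumes P: "psd P" and PQ: "P ** P = Q ** Q" and Qu: "Q *v u = l *\<^sub>R u" and l: "0 \<le> l"
  shows "P *v u = l *\<^sub>R u"
proof -
  have hP: "hermitian P" using P by (simp add: psd_def)
  have "P *v (P *v u) = Q *v (Q *v u)" by (simp add: matrix_vector_mul_assoc PQ)
  then have PPu: "P *v (P *v u) = (l * l) *\<^sub>R u" by (simp add: Qu mv_scaleR2)
  define w where "w = P *v u - l *\<^sub>R u"
  have Pw: "P *v w = - l *\<^sub>R w"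
    by (simp add: w_def matrix_vector_mult_diff_distrib mv_scaleR2 PPu algebra_simps)
  have q: "0 \<le> qf P w" using P by (simp add: psd_iff)
  show ?thesis
  proof (cases "l = 0")
    case True
    then have "P *v (P *v u) = 0" using PPu by simp
    then have "inner (P *v u) (P *v u) = 0" by (simp add: herm_inner[OF hP, symmetric])
    then show ?thesis using True by simp
  next
    case False
    then have "l > 0" using l by simp
    have "qf P w = - l * inner w w" by (simp add: qf_def Pw)
    with q have "l * inner w w \<le> 0" by simp
    with \<open>l > 0\<close> have "inner w w \<le> 0"
      by (simp add: mult_le_0_iff)
    then have "w = 0" by (metis inner_eq_zero_iff inner_ge_zero order_antisym)
    then show ?thesis by (simp add: w_def)
  qed
qed

lemma psd_sqrt_unique:
  fixes P Q :: "complex^'n^'n"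
  assumes P: "psd P" and Q: "psd Q" and PQ: "P ** P = Q ** Q"
  shows "P = Q"
proof -
  have hQ: "hermitian Q" using Q by (simp add: psd_def)
  obtain v :: "'n \<Rightarrow> complex^'n" and lam :: "'n \<Rightarrow> real" where on: "\<forall>i j. cinner (v i) (v j) = (if i = j then 1 else 0)"
    and eig: "\<forall>i. Q *v v i = lam i *\<^sub>R v i" using spectral[OF hQ] by blast
  have nn: "0 \<le> lam i" for i using eig_nonneg[OF Q, of "v i" "lam i"] on eig by simp
  have eigP: "\<forall>i. P *v v i = lam i *\<^sub>R v i" using sqrt_eig[OF P PQ] eig nn by blast
  define U where "U = umat v"
  have u2: "U ** adjoint_mat U = mat 1" using umat_unitary[OF on] by (simp add: U_def)
  have "P ** U = Q ** U" using umat_eig[OF eig] umat_eig[OF eigP] by (simp add: U_def)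
  then have "P ** U ** adjoint_mat U = Q ** U ** adjoint_mat U" by simp
  then show ?thesis by (simp add: u2 flip: matrix_mul_assoc)
qed

lemma msqrt_props:
  assumes "psd X"
  shows "psd (msqrt X)" "msqrt X ** msqrt X = X"
proof -
  have "\<exists>!S. psd S \<and> S ** S = X"
    using psd_sqrt_exists[OF assms] psd_sqrt_unique by metis
  then have "psd (msqrt X) \<and> msqrt X ** msqrt X = X"
    unfolding msqrt_def by (rule theI')
  then show "psd (msqrt X)" "msqrt X ** msqrt X = X" by auto
qed



lemma disc_le:
  fixes a b c :: real
  assumes "\<And>t. 0 \<le> a + 2 * t * b + t^2 * c" and "0 \<le> c"
  shows "b^2 \<le> a * c"
proof (cases "c = 0")
  case True
  have "b = 0"
  proof (rule ccontr)
    assume "b \<noteq> 0"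
    have "0 \<le> a + 2 * (- (a + 1) / (2 * b)) * b" using assms(1)[of "- (a + 1) / (2 * b)"] True by simp
    also have "\<dots> = -1" using \<open>b \<noteq> 0\<close> by (simp add: field_simps)
    finally show False by simp
  qed
  then show ?thesis using True by simp
next
  case False
  then have cp: "c > 0" using assms(2) by simp
  have "0 \<le> a + 2 * (- b / c) * b + (- b / c)^2 * c" by (rule assms(1))
  also have "\<dots> = a - b^2 / c" using cp by (simp add: field_simps power2_eq_square)
  finally have "b^2 / c \<le> a" by simp
  then show ?thesis using cp by (simp add: field_simps mult.commute)
qed

lemma psd_cs:
  assumes "psd P"
  shows "(inner (P *v x) y)^2 \<le> qf P x * qf P y"
proof (rule disc_le)
  have hP: "hermitian P" using assms by (simp add: psd_def)
  fix t :: real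
  have "0 \<le> qf P (x + t *\<^sub>R y)" using assms by (simp add: psd_iff)
  then show "0 \<le> qf P x + 2 * t * inner (P *v x) y + t^2 * qf P y"
    using qf_expand[OF hP] by simp
next
  show "0 \<le> qf P y" using assms by (simp add: psd_iff)
qed

lemma key_sq:
  assumes P: "psd P" and c: "0 \<le> c" and bnd: "\<And>y. qf P y \<le> c * (norm y)^2"
  shows "(norm (P *v x))^2 \<le> c * qf P x"
proof (cases "P *v x = 0")
  case True
  then show ?thesis using P c by (simp add: psd_iff)
next
  case False
  define z where "z = P *v x"
  have "(inner (P *v x) z)^2 \<le> qf P x * qf P z" by (rule psd_cs[OF P])
  also have "\<dots> \<le> qf P x * (c * (norm z)^2)"
    using P bnd by (intro mult_left_mono) (auto simp: psd_iff)
  finally have "((norm z)^2)^2 \<le> (c * qf P x) * (norm z)^2"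
    by (simp add: z_def power2_norm_eq_inner mult_ac)
  then have "(norm z)^2 * (norm z)^2 \<le> (c * qf P x) * (norm z)^2"
    by (metis power2_eq_square)
  moreover have "(norm z)^2 > 0" using False by (simp add: z_def)
  ultimately have "(norm z)^2 \<le> c * qf P x"
    by (rule mult_right_le_imp_le)
  then show ?thesis by (simp add: z_def)
qed

lemma norm_diff_sq: "(norm (a - t *\<^sub>R (x::'a::real_inner)))^2 = (norm a)^2 - 2 * t * inner a x + t^2 * (norm x)^2"
  unfolding power2_norm_eq_inner by (simp add: power2_norm_eq_inner inner_diff_left inner_diff_right inner_commute power2_eq_square algebra_simps)

lemma norm_add_sq: "(norm (a + t *\<^sub>R (x::'a::real_inner)))^2 = (norm a)^2 + 2 * t * inner a x + t^2 * (norm x)^2"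
  unfolding power2_norm_eq_inner by (simp add: power2_norm_eq_inner inner_add_left inner_add_right inner_commute power2_eq_square algebra_simps)

lemma quad_bound:
  fixes a x :: "'a::real_inner"
  assumes "0 \<le> s" "2 * s * t = \<beta>" "s * t^2 = \<gamma>"
  shows "\<beta> * inner a x - \<gamma> * (norm x)^2 \<le> s * (norm a)^2"
proof -
  have "0 \<le> s * (norm (a - t *\<^sub>R x))^2" using assms by simp
  also have "\<dots> = s * (norm a)^2 - \<beta> * inner a x + \<gamma> * (norm x)^2"
    unfolding norm_diff_sq using assms(2,3) by (simp add: algebra_simps flip: assms(2,3))
  finally show ?thesis by simp
qed

lemma mono_sqrt:
  fixes P R :: "complex^'n^'n"
  assumes P: "psd P" and hR: "hermitian R" and e: "0 < e"
    and pd: "\<And>x. e * (norm x)^2 \<le> qf R x + qf P x"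
    and le: "\<And>x. norm (P *v x) \<le> norm (R *v x)"
  shows "qf P x \<le> qf R x"
proof -
  have hP: "hermitian P" using P by (simp add: psd_def)
  define D where "D = R - P"
  have hD: "hermitian D" unfolding D_def by (rule herm_diff[OF hR hP])
  have nz: "(\<chi> i. (1::complex)) \<noteq> (0::complex^'n)" by (simp add: vec_eq_iff)
  obtain u l where u: "norm u = 1" "D *v u = l *\<^sub>R u" and low: "\<forall>y. l * (norm y)^2 \<le> qf D y"
    using mineig[OF hD subspace_UNIV closed_UNIV _ _ nz] by auto
  show ?thesis
  proof (cases "0 \<le> l")
    case True
    then have "0 \<le> l * (norm x)^2" by simp
    then have "0 \<le> qf D x" using low[rule_format, of x] by linarith
    then show ?thesis by (simp add: D_def qf_diff)
  next
    case False
    have Ru: "R *v u = P *v u + l *\<^sub>R u" using u(2) by (simp add: D_def mv_diff algebra_simps)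
    have "(norm (R *v u))^2 = (norm (P *v u))^2 + 2 * l * inner (P *v u) u + l^2"
      unfolding Ru norm_add_sq using u(1) by simp
    moreover have "qf R u = qf P u + l"
      using u(1) by (simp add: qf_def Ru inner_add_right power2_norm_eq_inner[symmetric])
    moreover have "inner (P *v u) u = qf P u" by (simp add: qf_def inner_commute)
    ultimately have "(norm (R *v u))^2 - (norm (P *v u))^2 = l * (qf R u + qf P u)"
      by (simp add: power2_eq_square algebra_simps)
    also have "\<dots> \<le> l * e" using pd[of u] u(1) False by (intro mult_left_mono_neg) auto
    also have "\<dots> < 0" using False e by (simp add: mult_neg_pos)
    finally have "(norm (R *v u))^2 < (norm (P *v u))^2" by simp
    then have "norm (R *v u) < norm (P *v u)"
      by (rule power_less_imp_less_base) simp
    with le[of u] show ?thesis by simp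
  qed
qed

lemma jensen_norm:
  fixes v :: "nat \<Rightarrow> 'a::real_normed_vector"
  assumes "\<And>i. i \<in> I \<Longrightarrow> 0 \<le> w i" "sum w I = 1"
  shows "(norm (\<Sum>i\<in>I. w i *\<^sub>R v i))^2 \<le> (\<Sum>i\<in>I. w i * (norm (v i))^2)"
proof -
  define mu where "mu = (\<Sum>i\<in>I. w i * norm (v i))"
  have "norm (\<Sum>i\<in>I. w i *\<^sub>R v i) \<le> (\<Sum>i\<in>I. norm (w i *\<^sub>R v i))" by (rule norm_sum)
  also have "\<dots> = mu" unfolding mu_def using assms(1) by (intro sum.cong) auto
  finally have n1: "norm (\<Sum>i\<in>I. w i *\<^sub>R v i) \<le> mu" .
  have "0 \<le> (\<Sum>i\<in>I. w i * (norm (v i) - mu)^2)"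
    using assms(1) by (intro sum_nonneg mult_nonneg_nonneg) auto
  also have "\<dots> = (\<Sum>i\<in>I. w i * (norm (v i))^2 - 2 * mu * (w i * norm (v i)) + mu^2 * w i)"
    by (intro sum.cong) (simp_all add: power2_diff algebra_simps)
  also have "\<dots> = (\<Sum>i\<in>I. w i * (norm (v i))^2) - 2 * mu * (\<Sum>i\<in>I. w i * norm (v i)) + mu^2 * sum w I"
    by (simp add: sum.distrib sum_subtractf sum_distrib_left)
  also have "\<dots> = (\<Sum>i\<in>I. w i * (norm (v i))^2) - mu^2"
    using assms(2) by (simp add: mu_def power2_eq_square)
  finally have "mu^2 \<le> (\<Sum>i\<in>I. w i * (norm (v i))^2)" by simp
  moreover have "(norm (\<Sum>i\<in>I. w i *\<^sub>R v i))^2 \<le> mu^2"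
    using n1 by (intro power_mono) auto
  ultimately show ?thesis by linarith
qed



lemma aux1: "(p::real) > 0 \<Longrightarrow> s > 0 \<Longrightarrow> 2 * (s^2 / (4 * p)) * (2 * p / s) = s"
  by (simp add: field_simps power2_eq_square)
lemma aux2: "(p::real) > 0 \<Longrightarrow> s > 0 \<Longrightarrow> (s^2 / (4 * p)) * (2 * p / s)^2 = p"
  by (simp add: field_simps power2_eq_square)

lemma aux3:
  fixes s q p :: real
  assumes "s > 0" "s^2 - q^2 = 4 * p"
  shows "(s / 2 - q^2 / (4 * s))^2 = p + (q^2 / (4 * s))^2"
proof -
  define d where "d = q^2 / (4 * s)"
  have sd: "s * d = q^2 / 4" using assms(1) by (simp add: d_def)
  have "(s / 2 - d)^2 = s^2 / 4 - s * d + d^2" by (simp add: power2_diff power_divide algebra_simps)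
  also have "\<dots> = p + d^2" using sd assms(2) by simp
  finally show ?thesis by (simp add: d_def)
qed

lemma half:
  fixes A :: "nat \<Rightarrow> complex^'n^'n" and w :: "nat \<Rightarrow> real" and I :: "nat set" and m M :: real
  assumes m: "0 < m" and mM: "m < M" and fin: "finite I"
    and hA: "\<And>i. i \<in> I \<Longrightarrow> hermitian (A i)"
    and lo: "\<And>i x. i \<in> I \<Longrightarrow> m * (norm x)^2 \<le> qf (A i) x"
    and hi: "\<And>i x. i \<in> I \<Longrightarrow> qf (A i) x \<le> M * (norm x)^2"
    and w: "\<And>i. i \<in> I \<Longrightarrow> 0 < w i" and sw: "sum w I = 1"
  shows "psd (\<Sum>i\<in>I. w i *\<^sub>R (A i ** A i))"
    and "hermitian (\<Sum>i\<in>I. w i *\<^sub>R A i)"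
    and "m * (norm x)^2 \<le> qf (\<Sum>i\<in>I. w i *\<^sub>R A i) x"
    and "qf (msqrt (\<Sum>i\<in>I. w i *\<^sub>R (A i ** A i))) x \<le> ((M + m) / (2 * sqrt (M * m))) * qf (\<Sum>i\<in>I. w i *\<^sub>R A i) x"
    and "qf (msqrt (\<Sum>i\<in>I. w i *\<^sub>R (A i ** A i))) x \<le> qf (\<Sum>i\<in>I. w i *\<^sub>R A i) x + (M - m)^2 / (4 * (M + m)) * (norm x)^2"
proof -
  define X where "X = (\<Sum>i\<in>I. w i *\<^sub>R (A i ** A i))"
  define Ab where "Ab = (\<Sum>i\<in>I. w i *\<^sub>R A i)"
  have key: "(norm (A i *v y))^2 \<le> (M + m) * qf (A i) y - M * m * (norm y)^2" if i: "i \<in> I" for i y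
  proof -
    define P where "P = A i - m *\<^sub>R mat 1"
    have qP: "qf P z = qf (A i) z - m * (norm z)^2" for z
      by (simp add: P_def qf_diff qf_scaleR qf_mat1)
    have hP: "hermitian P" unfolding P_def by (intro herm_diff herm_scaleR herm_mat1 hA[OF i])
    have psdP: "psd P" unfolding psd_iff
      using lo[OF i] hP by (simp add: qP)
    have "(norm (P *v y))^2 \<le> (M - m) * qf P y"
      using key_sq[OF psdP, of "M - m"] mM hi[OF i] by (simp add: qP algebra_simps)
    moreover have "A i *v y = P *v y + m *\<^sub>R y" by (simp add: P_def mv_diff mv_scaleR)
    moreover have "inner (P *v y) y = qf P y" by (simp add: qf_def inner_commute)
    ultimately have "(norm (A i *v y))^2 \<le> (M - m) * qf P y + 2 * m * qf P y + m^2 * (norm y)^2"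
      by (simp add: norm_add_sq)
    also have "\<dots> = (M + m) * qf (A i) y - M * m * (norm y)^2"
      by (simp add: qP algebra_simps power2_eq_square)
    finally show ?thesis .
  qed
  have qX: "qf X y = (\<Sum>i\<in>I. w i * (norm (A i *v y))^2)" for y
    unfolding X_def qf_sum qf_scaleR using hA by (intro sum.cong) (auto simp: qf_sq)
  have qAb: "qf Ab y = (\<Sum>i\<in>I. w i * qf (A i) y)" for y
    unfolding Ab_def qf_sum qf_scaleR by simp
  have hX: "hermitian X" unfolding X_def using hA by (intro herm_sum herm_scaleR herm_sq) auto
  have "0 \<le> (\<Sum>i\<in>I. w i * (norm (A i *v y))^2)" for y
    using w by (intro sum_nonneg mult_nonneg_nonneg) (auto simp: less_imp_le)
  then have psdX: "psd X" unfolding psd_iff qX using hX by simp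
  then show "psd (\<Sum>i\<in>I. w i *\<^sub>R (A i ** A i))" by (simp add: X_def)
  have hAb: "hermitian Ab" unfolding Ab_def using hA by (intro herm_sum herm_scaleR) auto
  then show "hermitian (\<Sum>i\<in>I. w i *\<^sub>R A i)" by (simp add: Ab_def)
  have loAb: "m * (norm y)^2 \<le> qf Ab y" for y
  proof -
    have "m * (norm y)^2 = (\<Sum>i\<in>I. w i * (m * (norm y)^2))" using sw by (simp add: sum_distrib_right[symmetric])
    also have "\<dots> \<le> (\<Sum>i\<in>I. w i * qf (A i) y)"
      using lo w by (intro sum_mono mult_left_mono) (auto intro: less_imp_le)
    finally show ?thesis by (simp add: qAb)
  qed
  then show "m * (norm x)^2 \<le> qf (\<Sum>i\<in>I. w i *\<^sub>R A i) x" by (simp add: Ab_def)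
  have XAb: "qf X y \<le> (M + m) * qf Ab y - M * m * (norm y)^2" for y
  proof -
    have "qf X y \<le> (\<Sum>i\<in>I. w i * ((M + m) * qf (A i) y - M * m * (norm y)^2))"
      unfolding qX using key w by (intro sum_mono mult_left_mono) (auto intro: less_imp_le)
    also have "\<dots> = (M + m) * (\<Sum>i\<in>I. w i * qf (A i) y) - M * m * (norm y)^2 * sum w I"
      by (simp add: algebra_simps sum_subtractf sum_distrib_left sum_distrib_right)
    finally show ?thesis using sw by (simp add: qAb)
  qed
  define S where "S = msqrt X"
  have psdS: "psd S" and SS: "S ** S = X" using msqrt_props[OF psdX] by (simp_all add: S_def)
  have hS: "hermitian S" using psdS by (simp add: psd_def)
  have nS: "(norm (S *v y))^2 = qf X y" for y using qf_sq[OF hS, of y] by (simp add: SS)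
  have qS0: "0 \<le> qf S y" for y using psdS by (simp add: psd_iff)
  define c where "c = (M + m) / (2 * sqrt (M * m))"
  have Mm: "0 < M * m" using m mM by simp
  have cpos: "0 < c" using m mM by (simp add: c_def)
  have c2: "c^2 = (M + m)^2 / (4 * (M * m))"
    using Mm by (simp add: c_def power_divide power_mult_distrib)
  have hR: "hermitian (c *\<^sub>R Ab)" by (rule herm_scaleR[OF hAb])
  have "qf S x \<le> qf (c *\<^sub>R Ab) x"
  proof (rule mono_sqrt[OF psdS hR])
    show "0 < c * m" using cpos m by simp
    fix y
    show "c * m * (norm y)^2 \<le> qf (c *\<^sub>R Ab) y + qf S y"
    proof -
      have "c * (m * (norm y)^2) \<le> c * qf Ab y" using loAb[of y] cpos by (simp add: mult_left_mono)
      then show ?thesis using qS0[of y] by (simp add: qf_scaleR mult_ac)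
    qed
    have "qf X y \<le> (M + m) * qf Ab y - M * m * (norm y)^2" by (rule XAb)
    also have "\<dots> \<le> c^2 * (norm (Ab *v y))^2"
    proof -
      have "(M + m) * inner (Ab *v y) y - (M * m) * (norm y)^2 \<le> c^2 * (norm (Ab *v y))^2"
      proof (rule quad_bound[where t = "2 * M * m / (M + m)"])
        show "0 \<le> c^2" by simp
        show "2 * c^2 * (2 * M * m / (M + m)) = M + m"
          using aux1[of "M * m" "M + m"] Mm m mM unfolding c2 by (simp add: mult.assoc)
        show "c^2 * (2 * M * m / (M + m))^2 = M * m"
        proof -
          have eq: "2 * M * m = 2 * (M * m)" by simp
          show ?thesis unfolding c2 eq by (rule aux2) (use Mm m mM in auto)
        qed
      qed
      then show ?thesis by (simp add: qf_def inner_commute mult_ac)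
    qed
    also have "\<dots> = (norm ((c *\<^sub>R Ab) *v y))^2"
      using cpos by (simp add: mv_scaleR power_mult_distrib)
    finally have "(norm (S *v y))^2 \<le> (norm ((c *\<^sub>R Ab) *v y))^2" by (simp add: nS)
    then show "norm (S *v y) \<le> norm ((c *\<^sub>R Ab) *v y)"
      by (rule power2_le_imp_le) simp
  qed
  then show "qf (msqrt (\<Sum>i\<in>I. w i *\<^sub>R (A i ** A i))) x \<le> ((M + m) / (2 * sqrt (M * m))) * qf (\<Sum>i\<in>I. w i *\<^sub>R A i) x"
    by (simp add: S_def X_def Ab_def c_def qf_scaleR)
  define d where "d = (M - m)^2 / (4 * (M + m))"
  have d0: "0 \<le> d" using m mM by (simp add: d_def)
  define R where "R = Ab + d *\<^sub>R mat 1"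
  have hR2: "hermitian R" unfolding R_def by (intro herm_add hAb herm_scaleR herm_mat1)
  have qR: "qf R y = qf Ab y + d * (norm y)^2" for y by (simp add: R_def qf_add qf_scaleR qf_mat1)
  have "qf S x \<le> qf R x"
  proof (rule mono_sqrt[OF psdS hR2 m])
    fix y
    show "m * (norm y)^2 \<le> qf R y + qf S y"
      using loAb[of y] qS0[of y] d0 by (simp add: qR) (smt (verit) mult_nonneg_nonneg zero_le_power2)
    have Ry: "R *v y = Ab *v y + d *\<^sub>R y" by (simp add: R_def mv_add mv_scaleR)
    have "(M + m - 2 * d) * inner (Ab *v y) y - (M * m + d^2) * (norm y)^2 \<le> 1 * (norm (Ab *v y))^2"
    proof (rule quad_bound[where t = "(M + m) / 2 - d"])
      show "0 \<le> (1::real)" by simp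
      show "2 * 1 * ((M + m) / 2 - d) = M + m - 2 * d" by simp
      show "1 * ((M + m) / 2 - d)^2 = M * m + d^2"
      proof -
        have e: "(M + m)^2 - (M - m)^2 = 4 * (M * m)" by (simp add: power2_eq_square algebra_simps)
        have "M + m > 0" using m mM by simp
        from aux3[OF this e] show ?thesis unfolding d_def by simp
      qed
    qed
    then have "qf X y \<le> (norm (R *v y))^2"
      using XAb[of y] unfolding Ry norm_add_sq by (simp add: qf_def inner_commute algebra_simps)
    then have "(norm (S *v y))^2 \<le> (norm (R *v y))^2" by (simp add: nS)
    then show "norm (S *v y) \<le> norm (R *v y)"
      by (rule power2_le_imp_le) simp
  qed
  then show "qf (msqrt (\<Sum>i\<in>I. w i *\<^sub>R (A i ** A i))) x \<le> qf (\<Sum>i\<in>I. w i *\<^sub>R A i) x + (M - m)^2 / (4 * (M + m)) * (norm x)^2"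
    by (simp add: S_def X_def Ab_def d_def qR)
qed



theorem mainTheorem9:
  fixes A B :: "nat \<Rightarrow> complex^'n^'n" and w :: "nat \<Rightarrow> real"
    and k :: nat and m M :: real
  assumes "0 < m" and "m < M"
    and "\<And>i. i \<in> {1..k} \<Longrightarrow> hermitian (A i) \<and> hermitian (B i)"
    and "\<And>i. i \<in> {1..k} \<Longrightarrow> m *\<^sub>R mat 1 \<le>\<^sub>L A i \<and> A i \<le>\<^sub>L M *\<^sub>R mat 1"
    and "\<And>i. i \<in> {1..k} \<Longrightarrow> m *\<^sub>R mat 1 \<le>\<^sub>L B i \<and> B i \<le>\<^sub>L M *\<^sub>R mat 1"
    and "\<And>i. i \<in> {1..k} \<Longrightarrow> 0 < w i"
    and "(\<Sum>i=1..k. w i) = 1"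
  shows "(msqrt (\<Sum>i=1..k. w i *\<^sub>R (A i ** A i)) + msqrt (\<Sum>i=1..k. w i *\<^sub>R (B i ** B i))
           \<le>\<^sub>L ((M + m) / (2 * sqrt (M * m))) *\<^sub>R
               msqrt (\<Sum>i=1..k. w i *\<^sub>R ((A i + B i) ** (A i + B i))))
         \<and> (msqrt (\<Sum>i=1..k. w i *\<^sub>R (A i ** A i)) + msqrt (\<Sum>i=1..k. w i *\<^sub>R (B i ** B i))
           \<le>\<^sub>L ((M - m)^2 / (2 * (M + m))) *\<^sub>R mat 1
               + msqrt (\<Sum>i=1..k. w i *\<^sub>R ((A i + B i) ** (A i + B i))))"
proof -
  note m = assms(1) and mM = assms(2) and w = assms(6) and sw = assms(7)
  define I where "I = {1..k}"
  have fin: "finite I" by (simp add: I_def)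
  have sw': "sum w I = 1" using sw by (simp add: I_def)
  have w': "\<And>i. i \<in> I \<Longrightarrow> 0 < w i" using w by (simp add: I_def)
  have hA: "\<And>i. i \<in> I \<Longrightarrow> hermitian (A i)" and hB: "\<And>i. i \<in> I \<Longrightarrow> hermitian (B i)"
    using assms(3) by (auto simp: I_def)
  have loA: "\<And>i x. i \<in> I \<Longrightarrow> m * (norm x)^2 \<le> qf (A i) x"
    and hiA: "\<And>i x. i \<in> I \<Longrightarrow> qf (A i) x \<le> M * (norm x)^2"
    using assms(4) by (auto simp: I_def loewner_iff qf_scaleR qf_mat1)
  have loB: "\<And>i x. i \<in> I \<Longrightarrow> m * (norm x)^2 \<le> qf (B i) x"
    and hiB: "\<And>i x. i \<in> I \<Longrightarrow> qf (B i) x \<le> M * (norm x)^2"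
    using assms(5) by (auto simp: I_def loewner_iff qf_scaleR qf_mat1)
  have hC: "\<And>i. i \<in> I \<Longrightarrow> hermitian (A i + B i)" using hA hB by (simp add: herm_add)
  have loC: "(2 * m) * (norm x)^2 \<le> qf (A i + B i) x" if "i \<in> I" for i x
  proof -
    have "2 * (m * (norm x)^2) \<le> qf (A i) x + qf (B i) x" using loA[OF that, of x] loB[OF that, of x] by linarith
    then show ?thesis by (simp add: qf_add mult.assoc)
  qed
  have hiC: "qf (A i + B i) x \<le> (2 * M) * (norm x)^2" if "i \<in> I" for i x
  proof -
    have "qf (A i) x + qf (B i) x \<le> 2 * (M * (norm x)^2)" using hiA[OF that, of x] hiB[OF that, of x] by linarith
    then show ?thesis by (simp add: qf_add mult.assoc)
  qed
  have m2: "0 < 2 * m" "2 * m < 2 * M" using m mM by auto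
  note HA = half[OF m mM fin hA loA hiA w' sw']
  note HB = half[OF m mM fin hB loB hiB w' sw']
  note HC = half[OF m2 fin hC loC hiC w' sw']
  define SX where "SX = msqrt (\<Sum>i\<in>I. w i *\<^sub>R (A i ** A i))"
  define SY where "SY = msqrt (\<Sum>i\<in>I. w i *\<^sub>R (B i ** B i))"
  define Z where "Z = (\<Sum>i\<in>I. w i *\<^sub>R ((A i + B i) ** (A i + B i)))"
  define SZ where "SZ = msqrt Z"
  define Ab where "Ab = (\<Sum>i\<in>I. w i *\<^sub>R A i)"
  define Bb where "Bb = (\<Sum>i\<in>I. w i *\<^sub>R B i)"
  define Cb where "Cb = (\<Sum>i\<in>I. w i *\<^sub>R (A i + B i))"
  have psdZ: "psd Z" using HC(1) by (simp add: Z_def)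
  have psdSZ: "psd SZ" and SZSZ: "SZ ** SZ = Z" using msqrt_props[OF psdZ] by (simp_all add: SZ_def)
  have hSZ: "hermitian SZ" using psdSZ by (simp add: psd_def)
  have psdSX: "psd SX" using msqrt_props[OF HA(1)] by (simp add: SX_def)
  have psdSY: "psd SY" using msqrt_props[OF HB(1)] by (simp add: SY_def)
  have hSX: "hermitian SX" using psdSX by (simp add: psd_def)
  have hSY: "hermitian SY" using psdSY by (simp add: psd_def)
  have qCb: "qf Cb x = qf Ab x + qf Bb x" for x
    by (simp add: Cb_def Ab_def Bb_def qf_sum qf_scaleR qf_add algebra_simps sum.distrib)
  have hCb: "hermitian Cb" using HC(2) by (simp add: Cb_def)
  have loCb: "2 * m * (norm x)^2 \<le> qf Cb x" for x using HC(3) by (simp add: Cb_def)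
  have psdCb: "psd Cb" unfolding psd_iff using hCb loCb m
    by (smt (verit) mult_nonneg_nonneg zero_le_power2)
  have qSZ0: "0 \<le> qf SZ x" for x using psdSZ by (simp add: psd_iff)
  have CbSZ: "qf Cb x \<le> qf SZ x" for x
  proof (rule mono_sqrt[OF psdCb hSZ m2(1)])
    fix y
    show "2 * m * (norm y)^2 \<le> qf SZ y + qf Cb y" using loCb[of y] qSZ0[of y] by simp
    have "(norm (Cb *v y))^2 = (norm (\<Sum>i\<in>I. w i *\<^sub>R ((A i + B i) *v y)))^2"
      by (simp add: Cb_def mv_sum mv_scaleR)
    also have "\<dots> \<le> (\<Sum>i\<in>I. w i * (norm ((A i + B i) *v y))^2)"
      by (rule jensen_norm) (use w' sw' in \<open>auto intro: less_imp_le\<close>)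
    also have "\<dots> = qf Z y"
      unfolding Z_def qf_sum qf_scaleR using hC by (intro sum.cong) (auto simp: qf_sq)
    also have "\<dots> = (norm (SZ *v y))^2" using qf_sq[OF hSZ, of y] by (simp add: SZSZ)
    finally show "norm (Cb *v y) \<le> norm (SZ *v y)"
      by (rule power2_le_imp_le) simp
  qed
  define c where "c = (M + m) / (2 * sqrt (M * m))"
  have c0: "0 \<le> c" using m mM by (simp add: c_def)
  have X1: "qf SX x \<le> c * qf Ab x" for x using HA(4) by (simp add: SX_def c_def Ab_def)
  have Y1: "qf SY x \<le> c * qf Bb x" for x using HB(4) by (simp add: SY_def c_def Bb_def)
  have X2: "qf SX x \<le> qf Ab x + (M - m)^2 / (4 * (M + m)) * (norm x)^2" for x
    using HA(5) by (simp add: SX_def Ab_def)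
  have Y2: "qf SY x \<le> qf Bb x + (M - m)^2 / (4 * (M + m)) * (norm x)^2" for x
    using HB(5) by (simp add: SY_def Bb_def)
  have Mm0: "M + m \<noteq> 0" using m mM by simp
  have cc: "(M - m)^2 / (2 * (M + m)) = 2 * ((M - m)^2 / (4 * (M + m)))"
    using Mm0 by (simp add: field_simps)
  have P1: "SX + SY \<le>\<^sub>L c *\<^sub>R SZ"
    unfolding loewner_iff
  proof (intro conjI allI herm_add herm_scaleR hSX hSY hSZ)
    fix x
    have "qf (SX + SY) x \<le> c * qf Ab x + c * qf Bb x" using X1[of x] Y1[of x] by (simp add: qf_add)
    also have "\<dots> = c * qf Cb x" by (simp add: qCb algebra_simps)
    also have "\<dots> \<le> c * qf SZ x" using CbSZ[of x] c0 by (rule mult_left_mono)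
    finally show "qf (SX + SY) x \<le> qf (c *\<^sub>R SZ) x" by (simp add: qf_scaleR)
  qed
  have P2: "SX + SY \<le>\<^sub>L ((M - m)^2 / (2 * (M + m))) *\<^sub>R mat 1 + SZ"
    unfolding loewner_iff
  proof (intro conjI allI herm_add herm_scaleR hSX hSY hSZ herm_mat1)
    fix x
    have "qf (SX + SY) x \<le> qf Cb x + 2 * ((M - m)^2 / (4 * (M + m))) * (norm x)^2"
      using X2[of x] Y2[of x] by (simp add: qf_add qCb algebra_simps)
    also have "\<dots> \<le> qf SZ x + 2 * ((M - m)^2 / (4 * (M + m))) * (norm x)^2" using CbSZ[of x] by simp
    finally have "qf (SX + SY) x \<le> qf SZ x + 2 * ((M - m)^2 / (4 * (M + m))) * (norm x)^2" .
    then show "qf (SX + SY) x \<le> qf (((M - m)^2 / (2 * (M + m))) *\<^sub>R mat 1 + SZ) x"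
      by (simp only: qf_add qf_scaleR qf_mat1 cc)
  qed
  show ?thesis using P1 P2 by (simp add: SX_def SY_def SZ_def Z_def c_def I_def)
qed

end
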